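(* Let $X$ be a generalized homology sphere of dimension $2n$. Suppose that for every vertex $v$ of $X$ one has $(-1)^nh_{\mathrm{Lk}_v}(-1)\geq0$. Then the coefficient of $t^n$ in $\gamma_X$ (its highest possible coefficient) is nonnegative.
   Context: Simplicial complexes contain the empty face; $\#\sigma$ is the number of vertices of $\sigma$. Link: $\mathrm{Lk}_\sigma=\{\tau\in X:\sigma\cup\tau\in X,\ \sigma\cap\tau=\emptyset\}$. Generalized homology sphere of dimension $m-1$: every link $\mathrm{Lk}_\sigma$ (including $\sigma=\emptyset$) has the homology of a sphere of dimension $m-1-\#\sigma$; links of vertices of $X$ are then generalized homology spheres of dimension $2n-1$. $f_X(t)=\sum_{\sigma\in X}t^{\#\sigma}$; for a generalized homology sphere of dimension $m-1$, $h_X$ is defined by $(1+t)^mh_X(\frac1{1+t})=t^mf_X(\frac1t)$ and $\gamma_X$ is the unique polynomial of degree at most $\lfloor m/2\rfloor$ with $h_X(t)=(1+t)^m\gamma_X(\frac{t}{(1+t)^2})$. *)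

theory Defs
  imports "HOL-Library.Function_Algebras" "HOL-Computational_Algebra.Polynomial"
begin

definition simplicial_complex :: "'v set set \<Rightarrow> bool" where
  "simplicial_complex X \<longleftrightarrow> finite X \<and> {} \<in> X \<and> (\<forall>\<sigma>\<in>X. \<forall>\<tau>. \<tau> \<subseteq> \<sigma> \<longrightarrow> \<tau> \<in> X)"

definition link :: "'v set set \<Rightarrow> 'v set \<Rightarrow> 'v set set" where
  "link X \<sigma> = {\<tau> \<in> X. \<sigma> \<union> \<tau> \<in> X \<and> \<sigma> \<inter> \<tau> = {}}"

text \<open>Chains are indexed by the number j of vertices of the faces (j = i + 1 for
  homological degree i; j = 0 is the empty face, i.e. augmented / reduced chains).\<close>

definition faces :: "'v set set \<Rightarrow> nat \<Rightarrow> 'v set set" where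
  "faces X j = {\<sigma> \<in> X. card \<sigma> = j}"

definition fscale :: "'k::field \<Rightarrow> ('v set \<Rightarrow> 'k) \<Rightarrow> ('v set \<Rightarrow> 'k)" where
  "fscale a c = (\<lambda>\<sigma>. a * c \<sigma>)"

definition chains :: "'k::field itself \<Rightarrow> 'v set set \<Rightarrow> nat \<Rightarrow> ('v set \<Rightarrow> 'k) set" where
  "chains _ X j = {c. \<forall>\<sigma>. \<sigma> \<notin> faces X j \<longrightarrow> c \<sigma> = 0}"

text \<open>Boundary map from j-vertex chains to (j-1)-vertex chains, orientation induced by the
  linear order of the vertices: the coefficient of face \<rho> is the signed sum over the
  cofaces \<rho> \<union> {v}, with sign (-1)^(number of vertices of \<rho> below v).\<close>

definition bd :: "'v::linorder set set \<Rightarrow> nat \<Rightarrow> ('v set \<Rightarrow> 'k::field) \<Rightarrow> ('v set \<Rightarrow> 'k)" where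
  "bd X j c = (\<lambda>\<rho>. if j \<ge> 1 \<and> \<rho> \<in> faces X (j - 1) then
      (\<Sum>v\<in>{v. v \<notin> \<rho> \<and> insert v \<rho> \<in> X}. (-1) ^ card {w\<in>\<rho>. w < v} * c (insert v \<rho>))
    else 0)"

text \<open>Reduced Betti number in homological degree j - 1.\<close>

definition rbetti :: "'k::field itself \<Rightarrow> 'v::linorder set set \<Rightarrow> nat \<Rightarrow> nat" where
  "rbetti K X j =
     vector_space.dim (fscale :: 'k \<Rightarrow> _) {c \<in> chains K X j. bd X j c = 0}
     - vector_space.dim (fscale :: 'k \<Rightarrow> _) (bd X (Suc j) ` chains K X (Suc j))"

text \<open>X has the (reduced, 'k-coefficient) homology of a sphere of dimension d = j - 1.\<close>

definition sphere_homology :: "'k::field itself \<Rightarrow> 'v::linorder set set \<Rightarrow> nat \<Rightarrow> bool" where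
  "sphere_homology K X j \<longleftrightarrow> (\<forall>i. rbetti K X i = (if i = j then 1 else 0))"

text \<open>Generalized homology sphere of dimension m - 1 (over the field 'k).\<close>

definition gen_homology_sphere :: "'k::field itself \<Rightarrow> 'v::linorder set set \<Rightarrow> nat \<Rightarrow> bool" where
  "gen_homology_sphere K X m \<longleftrightarrow> simplicial_complex X \<and>
     (\<forall>\<sigma>\<in>X. card \<sigma> \<le> m \<and> sphere_homology K (link X \<sigma>) (m - card \<sigma>))"

definition f_poly :: "'v set set \<Rightarrow> real poly" where
  "f_poly X = (\<Sum>\<sigma>\<in>X. monom 1 (card \<sigma>))"

definition h_poly :: "'v set set \<Rightarrow> nat \<Rightarrow> real poly" where
  "h_poly X m = (THE h. \<forall>t::real. t \<noteq> 0 \<and> t \<noteq> -1 \<longrightarrow>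
       (1 + t) ^ m * poly h (1 / (1 + t)) = t ^ m * poly (f_poly X) (1 / t))"

definition gamma_poly :: "'v set set \<Rightarrow> nat \<Rightarrow> real poly" where
  "gamma_poly X m = (THE g. degree g \<le> m div 2 \<and> (\<forall>t::real. t \<noteq> -1 \<longrightarrow>
       poly (h_poly X m) t = (1 + t) ^ m * poly g (t / (1 + t) ^ 2)))"

lemma vector_space_fscale: "vector_space (fscale :: 'k::field \<Rightarrow> ('v set \<Rightarrow> 'k) \<Rightarrow> _)"
  by unfold_locales (auto simp: fscale_def algebra_simps fun_eq_iff)

end

theory Submission
  imports Defs
begin

context vector_space begin

lemma span_disjoint_zero:
  assumes ind: "independent B" and fin: "finite B" and K: "K \<subseteq> B" and C: "C \<subseteq> B"
    and KC: "K \<inter> C = {}" and xK: "x \<in> span K" and xC: "x \<in> span C"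
  shows "x = 0"
proof -
  have fK: "finite K" using fin K finite_subset by blast
  have fC: "finite C" using fin C finite_subset by blast
  obtain a where a: "x = (\<Sum>v\<in>K. a v *s v)" using xK span_finite[OF fK] by auto
  obtain b where b: "x = (\<Sum>v\<in>C. b v *s v)" using xC span_finite[OF fC] by auto
  define u where "u v = (if v \<in> K then a v else - b v)" for v
  have "(\<Sum>v\<in>K \<union> C. u v *s v) = (\<Sum>v\<in>K. u v *s v) + (\<Sum>v\<in>C. u v *s v)"
    using fK fC KC by (simp add: sum.union_disjoint)
  also have "(\<Sum>v\<in>K. u v *s v) = x" using a by (simp add: u_def)
  also have "(\<Sum>v\<in>C. u v *s v) = - x" using b KC
    by (auto simp: u_def sum_negf[symmetric] intro!: sum.cong)
  finally have s0: "(\<Sum>v\<in>K \<union> C. u v *s v) = 0" by simp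
  have "\<forall>v\<in>K. u v = 0" using independentD[OF ind _ _ s0] fK fC K C by blast
  then have "\<forall>v\<in>K. a v = 0" by (simp add: u_def)
  then show ?thesis using a by simp
qed

lemma rank_nullity_sub:
  assumes lin: "module_hom scale scale f" and S: "subspace S" and B0: "S \<subseteq> span B0" "finite B0"
  shows "dim S = dim {x\<in>S. f x = 0} + dim (f ` S)"
proof -
  interpret lf: module_hom scale scale f by (rule lin)
  let ?Z = "{x\<in>S. f x = 0}"
  have Zeq: "?Z = S \<inter> {x. f x = 0}" by auto
  have subZ: "subspace ?Z"
    unfolding Zeq by (rule subspace_inter[OF S lf.subspace_kernel])
  obtain K where K: "K \<subseteq> ?Z" "independent K" "?Z \<subseteq> span K" "card K = dim ?Z"
    using basis_exists by blast
  obtain B where B: "K \<subseteq> B" "B \<subseteq> S" "independent B" "S \<subseteq> span B"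
    using maximal_independent_subset_extend[of K S] K by auto
  have "B \<subseteq> span B0" using B(2) B0(1) by auto
  then have finB: "finite B" using independent_span_bound[OF B0(2) B(3)] by simp
  have dimS: "dim S = card B" using basis_card_eq_dim[OF B(2) B(4) B(3)] by simp
  define C where "C = B - K"
  have spanK: "span K \<subseteq> ?Z" using span_minimal[OF K(1) subZ] .
  have injC: "inj_on f (span C)"
  proof (subst lf.inj_on_iff_eq_0[OF subspace_span], intro ballI impI)
    fix x assume x: "x \<in> span C" "f x = 0"
    have "x \<in> S" using x(1) span_minimal[of C S] S B(2) C_def by auto
    then have "x \<in> span K" using x K(3) by auto
    then show "x = 0" using span_disjoint_zero[OF B(3) finB B(1), of C x] x(1) C_def by auto
  qed
  have indC: "independent (f ` C)"
    using lf.independent_injective_image[OF independent_mono[OF B(3)] injC] C_def by auto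
  have injC': "inj_on f C" using inj_on_subset[OF injC span_superset] .
  have "span (f ` S) = span (f ` C)"
  proof (rule span_eq[THEN iffD2], rule conjI)
    show "f ` S \<subseteq> span (f ` C)"
    proof
      fix y assume "y \<in> f ` S"
      then obtain x where x: "x \<in> S" "y = f x" by auto
      have KC: "K \<union> C = B" using B(1) C_def by auto
      have "x \<in> span (K \<union> C)" using x B(4) unfolding KC by auto
      then obtain p q where pq: "x = p + q" "p \<in> span K" "q \<in> span C" using span_Un by blast
      have "f p = 0" using pq(2) spanK by auto
      then have "y = f q" using x pq by (simp add: lf.add)
      then show "y \<in> span (f ` C)" using pq(3) lf.span_image by auto
    qed
    show "f ` C \<subseteq> span (f ` S)" using B(2) C_def by (auto intro!: span_base)
  qed
  then have "dim (f ` S) = dim (f ` C)" using span_eq_dim by blast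
  also have "\<dots> = card (f ` C)" using dim_eq_card_independent[OF indC] .
  also have "\<dots> = card C" using card_image[OF injC'] .
  also have "\<dots> = card B - card K" using C_def B(1) finB by (simp add: card_Diff_subset finite_subset)
  finally have "dim (f ` S) = card B - card K" .
  moreover have "card K \<le> card B" using B(1) finB card_mono by blast
  ultimately show ?thesis using dimS K(4) by simp
qed

lemma dim_le_of_subset:
  assumes "A \<subseteq> Z" "Z \<subseteq> span B0" "finite B0"
  shows "dim A \<le> dim Z"
proof -
  obtain K where K: "K \<subseteq> A" "independent K" "A \<subseteq> span K" "card K = dim A"
    using basis_exists by blast
  have KZ: "K \<subseteq> Z" using K(1) assms(1) by auto
  obtain B where B: "K \<subseteq> B" "B \<subseteq> Z" "independent B" "Z \<subseteq> span B"
    using maximal_independent_subset_extend[OF KZ K(2)] by blast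
  have "B \<subseteq> span B0" using B(2) assms(2) by auto
  then have finB: "finite B" using independent_span_bound[OF assms(3) B(3)] by simp
  have "dim Z = card B" using basis_card_eq_dim[OF B(2) B(4) B(3)] by simp
  then show ?thesis using K(4) card_mono[OF finB B(1)] by simp
qed

end

interpretation V: vector_space "fscale :: 'k::field \<Rightarrow> ('v set \<Rightarrow> 'k) \<Rightarrow> _"
  by (rule vector_space_fscale)

lemma sum_fun_apply: "(\<Sum>i\<in>A. f i) x = (\<Sum>i\<in>A. f i x)"
  by (induct A rule: infinite_finite_induct) auto

lemma fscale_apply[simp]: "fscale a c x = a * c x" by (simp add: fscale_def)

lemma chains_subspace: "module.subspace (fscale :: 'k::field \<Rightarrow> _) (chains TYPE('k) X j)"
  by (auto simp: V.subspace_def chains_def)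

lemma bd_add: "bd X j (c1 + c2) = bd X j c1 + bd X j c2"
  by (rule ext) (simp add: bd_def sum.distrib distrib_left)

lemma bd_scale: "bd X j (fscale a c) = fscale a (bd X j c)"
  by (rule ext) (simp add: bd_def sum_distrib_left mult.left_commute)

lemma bd_linear: "module_hom (fscale :: 'k::field \<Rightarrow> _) fscale (bd X j :: ('v::linorder set \<Rightarrow> 'k) \<Rightarrow> _)"
  unfolding module_hom_iff_linear Vector_Spaces.linear_iff
  using vector_space_fscale bd_add bd_scale by blast

definition indf :: "'v set \<Rightarrow> 'v set \<Rightarrow> 'k::field" where
  "indf \<sigma> = (\<lambda>\<tau>. if \<tau> = \<sigma> then 1 else 0)"

lemma dim_chains:
  fixes X :: "'v set set"
  assumes fin: "finite X"
  shows "vector_space.dim (fscale :: 'k::field \<Rightarrow> _) (chains TYPE('k) X j) = card (faces X j)"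
    and "chains TYPE('k) X j \<subseteq> module.span (fscale :: 'k::field \<Rightarrow> _) ((indf :: _ \<Rightarrow> _ \<Rightarrow> 'k) ` faces X j)"
proof -
  let ?F = "faces X j"
  let ?I = "(indf :: _ \<Rightarrow> _ \<Rightarrow> 'k) ` ?F"
  have finF: "finite ?F" using fin by (simp add: faces_def)
  have sub: "?I \<subseteq> chains TYPE('k) X j" by (auto simp: chains_def indf_def)
  have sp: "chains TYPE('k) X j \<subseteq> V.span ?I"
  proof
    fix c :: "'v set \<Rightarrow> 'k" assume c: "c \<in> chains TYPE('k) X j"
    have "c = (\<Sum>\<sigma>\<in>?F. fscale (c \<sigma>) (indf \<sigma>))"
    proof
      fix \<tau>
      have "(\<Sum>\<sigma>\<in>?F. fscale (c \<sigma>) (indf \<sigma>)) \<tau> = (\<Sum>\<sigma>\<in>?F. c \<sigma> * indf \<sigma> \<tau>)"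
        by (simp add: sum_fun_apply)
      also have "\<dots> = (if \<tau> \<in> ?F then c \<tau> else 0)"
        using finF by (simp add: indf_def if_distrib cong: if_cong)
      also have "\<dots> = c \<tau>" using c by (auto simp: chains_def)
      finally show "c \<tau> = (\<Sum>\<sigma>\<in>?F. fscale (c \<sigma>) (indf \<sigma>)) \<tau>" by simp
    qed
    also have "\<dots> \<in> V.span ?I"
      by (intro V.span_sum V.span_scale V.span_base) auto
    finally show "c \<in> V.span ?I" .
  qed
  then show "chains TYPE('k) X j \<subseteq> V.span ?I" .
  have inj: "inj_on (indf :: _ \<Rightarrow> _ \<Rightarrow> 'k) ?F"
    by (auto simp: inj_on_def indf_def fun_eq_iff split: if_splits)
  have indep: "V.independent ?I"
    unfolding V.independent_explicit_module
  proof (intro allI impI)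
    fix t u v assume t: "finite t" "t \<subseteq> ?I" "(\<Sum>w\<in>t. fscale (u w) w) = 0" "v \<in> t"
    then obtain \<sigma> where \<sigma>: "v = indf \<sigma>" by auto
    have "0 = (\<Sum>w\<in>t. fscale (u w) w) \<sigma>" using t(3) by simp
    also have "\<dots> = (\<Sum>w\<in>t. u w * w \<sigma>)" by (simp add: sum_fun_apply)
    also have "\<dots> = (\<Sum>w\<in>t. if w = v then u w else 0)"
    proof (rule sum.cong[OF refl])
      fix w assume "w \<in> t"
      then obtain \<rho> where \<rho>: "w = indf \<rho>" using t(2) by auto
      show "u w * w \<sigma> = (if w = v then u w else 0)"
        using \<rho> \<sigma> by (auto simp: indf_def fun_eq_iff)
    qed
    also have "\<dots> = u v" using t(1,4) by simp
    finally show "u v = 0" by simp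
  qed
  have "V.dim (chains TYPE('k) X j) = card ?I"
    using V.basis_card_eq_dim[OF sub sp indep] by simp
  then show "V.dim (chains TYPE('k) X j) = card ?F" using card_image[OF inj] by simp
qed

lemma pair_cancel:
  fixes F :: "'a::linorder \<Rightarrow> 'a \<Rightarrow> 'b::ab_group_add"
  assumes fin: "finite D" and sym: "\<And>v w. (v,w)\<in>D \<Longrightarrow> (w,v)\<in>D \<and> v \<noteq> w"
    and anti: "\<And>v w. (v,w)\<in>D \<Longrightarrow> F v w + F w v = 0"
  shows "(\<Sum>(v,w)\<in>D. F v w) = 0"
proof -
  let ?D1 = "{(v,w)\<in>D. v < w}" and ?D2 = "{(v,w)\<in>D. w < v}"
  have D: "D = ?D1 \<union> ?D2" using sym by (auto simp: neq_iff)
  have disj: "?D1 \<inter> ?D2 = {}" by auto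
  have f1: "finite ?D1" "finite ?D2" using fin by (auto intro: finite_subset)
  have img: "?D2 = (\<lambda>(v,w). (w,v)) ` ?D1" using sym by (auto simp: image_iff)
  have inj: "inj_on (\<lambda>(v,w). (w,v)) ?D1" by (auto simp: inj_on_def)
  have "(\<Sum>(v,w)\<in>?D2. F v w) = (\<Sum>(v,w)\<in>?D1. F w v)"
    by (subst img, subst sum.reindex[OF inj]) (auto simp: case_prod_beta intro!: sum.cong)
  then have "(\<Sum>(v,w)\<in>D. F v w) = (\<Sum>(v,w)\<in>?D1. F v w) + (\<Sum>(v,w)\<in>?D1. F w v)"
    by (subst D, subst sum.union_disjoint[OF f1 disj]) auto
  also have "\<dots> = (\<Sum>(v,w)\<in>?D1. F v w + F w v)"
    by (simp add: sum.distrib[symmetric] case_prod_beta)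
  also have "\<dots> = 0" using anti by (intro sum.neutral) auto
  finally show ?thesis .
qed

definition dclosed :: "'v set set \<Rightarrow> bool" where
  "dclosed L \<longleftrightarrow> finite L \<and> (\<forall>\<rho>\<in>L. finite \<rho> \<and> (\<forall>\<tau>. \<tau> \<subseteq> \<rho> \<longrightarrow> \<tau> \<in> L))"

lemma bd_bd:
  fixes L :: "'v::linorder set set" and c :: "'v set \<Rightarrow> 'k::field"
  assumes dc: "dclosed L" and c: "c \<in> chains TYPE('k) L (Suc (Suc j))"
  shows "bd L (Suc j) (bd L (Suc (Suc j)) c) = 0"
proof
  fix \<pi>
  show "bd L (Suc j) (bd L (Suc (Suc j)) c) \<pi> = 0 \<pi>"
  proof (cases "\<pi> \<in> faces L j")
    case False then show ?thesis by (simp add: bd_def)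
  next
    case True
    have finU: "finite (\<Union>L)" using dc by (auto simp: dclosed_def)
    have dcl: "\<And>\<rho> \<tau>. \<rho> \<in> L \<Longrightarrow> \<tau> \<subseteq> \<rho> \<Longrightarrow> \<tau> \<in> L" using dc by (auto simp: dclosed_def)
    have pfin: "finite \<pi>" "card \<pi> = j" "\<pi> \<in> L" using True dc by (auto simp: faces_def dclosed_def)
    define s :: "'v set \<Rightarrow> 'v \<Rightarrow> 'k" where "s \<rho> v = (-1) ^ card {w\<in>\<rho>. w < v}" for \<rho> v
    define A where "A = {v. v \<notin> \<pi> \<and> insert v \<pi> \<in> L}"
    define A' where "A' v = {w. w \<notin> insert v \<pi> \<and> insert w (insert v \<pi>) \<in> L}" for v
    define F where "F v w = s \<pi> v * (s (insert v \<pi>) w * c (insert w (insert v \<pi>)))" for v w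
    have finA: "finite A" unfolding A_def by (rule finite_subset[OF _ finU]) auto
    have finA': "finite (A' v)" for v unfolding A'_def by (rule finite_subset[OF _ finU]) auto
    have inner: "bd L (Suc (Suc j)) c (insert v \<pi>) = (\<Sum>w\<in>A' v. s (insert v \<pi>) w * c (insert w (insert v \<pi>)))"
      if "v \<in> A" for v
    proof -
      have "insert v \<pi> \<in> faces L (Suc j)" using that pfin by (auto simp: A_def faces_def)
      then show ?thesis by (simp add: bd_def A'_def s_def)
    qed
    have "bd L (Suc j) (bd L (Suc (Suc j)) c) \<pi> = (\<Sum>v\<in>A. s \<pi> v * bd L (Suc (Suc j)) c (insert v \<pi>))"
      using True by (simp add: bd_def A_def s_def)
    also have "\<dots> = (\<Sum>v\<in>A. \<Sum>w\<in>A' v. F v w)"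
      by (intro sum.cong refl) (simp add: inner F_def sum_distrib_left)
    also have "\<dots> = (\<Sum>(v,w)\<in>Sigma A A'. F v w)"
      by (rule sum.Sigma[OF finA]) (simp add: finA')
    also have "\<dots> = 0"
    proof (rule pair_cancel)
      show "finite (Sigma A A')" using finA finA' by auto
    next
      fix v w assume vw: "(v,w) \<in> Sigma A A'"
      then have h: "v \<notin> \<pi>" "w \<notin> \<pi>" "v \<noteq> w" "insert w (insert v \<pi>) \<in> L"
        by (auto simp: A_def A'_def)
      have "insert w \<pi> \<in> L" by (rule dcl[OF h(4)]) blast
      moreover have "insert v (insert w \<pi>) = insert w (insert v \<pi>)" by blast
      ultimately show "(w,v) \<in> Sigma A A' \<and> v \<noteq> w" using h unfolding A_def A'_def by auto
      have gen: "F a b + F b a = 0" if ab: "a < b" "a \<notin> \<pi>" "b \<notin> \<pi>" for a b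
      proof -
        have c1: "{x\<in>insert a \<pi>. x < b} = insert a {x\<in>\<pi>. x < b}" using ab by auto
        have c2: "{x\<in>insert b \<pi>. x < a} = {x\<in>\<pi>. x < a}" using ab by auto
        have c1': "card {x\<in>insert a \<pi>. x < b} = Suc (card {x\<in>\<pi>. x < b})"
          unfolding c1 using ab pfin by (simp add: card_insert_disjoint)
        have cc: "c (insert b (insert a \<pi>)) = c (insert a (insert b \<pi>))"
          by (metis insert_commute)
        have "F a b = - ((-1) ^ card {x\<in>\<pi>. x < a} * ((-1) ^ card {x\<in>\<pi>. x < b} * c (insert a (insert b \<pi>))))"
          unfolding F_def s_def c1' cc by simp
        moreover have "F b a = (-1) ^ card {x\<in>\<pi>. x < b} * ((-1) ^ card {x\<in>\<pi>. x < a} * c (insert a (insert b \<pi>)))"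
          unfolding F_def s_def c2 by simp
        ultimately show ?thesis by (simp add: algebra_simps)
      qed
      show "F v w + F w v = 0"
      proof (cases "v < w")
        case True
        then show ?thesis using gen h by blast
      next
        case False
        then have "w < v" using h(3) by auto
        then show ?thesis using gen[of w v] h by (simp add: add.commute)
      qed
    qed
    finally show ?thesis by simp
  qed
qed


lemma V_dim_zero: "V.dim {0 :: 'v set \<Rightarrow> 'k::field} = 0"
proof -
  have "V.span {0 :: 'v set \<Rightarrow> 'k} = V.span {}" using V.span_insert_0[of "{}"] by simp
  then have "V.dim {0 :: 'v set \<Rightarrow> 'k} = V.dim ({} :: ('v set \<Rightarrow> 'k) set)" by (rule V.span_eq_dim)
  also have "\<dots> = 0" using V.dim_eq_card_independent[OF V.independent_empty] by simp
  finally show ?thesis .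
qed

lemma tele:
  fixes r :: "nat \<Rightarrow> nat"
  shows "(\<Sum>j\<le>N. (-1::int)^j * (int (r (Suc j)) + int (r j))) = (-1)^N * r (Suc N) + r 0"
  by (induction N) (auto simp: algebra_simps)

lemma euler_poincare:
  fixes L :: "'v::linorder set set"
  assumes dc: "dclosed L" and bnd: "\<forall>\<rho>\<in>L. card \<rho> \<le> N" and dN: "d \<le> N"
    and sh: "sphere_homology TYPE('k::field) L d"
  shows "(\<Sum>\<rho>\<in>L. (-1::int) ^ card \<rho>) = (-1) ^ d"
proof -
  define ch where "ch j = chains TYPE('k) L j" for j
  define z where "z j = V.dim {c \<in> ch j. bd L j c = 0}" for j
  define r where "r j = V.dim (bd L j ` ch j)" for j
  have finL: "finite L" using dc by (simp add: dclosed_def)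
  have rn: "card (faces L j) = z j + r j" for j
  proof -
    have "V.dim (ch j) = z j + r j"
      unfolding z_def r_def ch_def
      by (rule V.rank_nullity_sub[OF bd_linear chains_subspace dim_chains(2)[OF finL]])
         (simp add: finL faces_def)
    moreover have "V.dim (chains TYPE('k) L j) = card (faces L j)" by (rule dim_chains(1)[OF finL])
    ultimately show ?thesis by (simp add: ch_def)
  qed
  have zero_ch: "(0 :: 'v set \<Rightarrow> 'k) \<in> ch j" for j by (simp add: ch_def chains_def)
  have r0: "r 0 = 0"
  proof -
    have "bd L 0 ` ch 0 = {0}" using zero_ch[of 0] by (auto simp: bd_def fun_eq_iff)
    then show ?thesis by (simp add: r_def V_dim_zero)
  qed
  have rN: "r (Suc N) = 0"
  proof -
    have "ch (Suc N) = {0}"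
    proof safe
      fix c :: "'v set \<Rightarrow> 'k" assume c: "c \<in> ch (Suc N)"
      have "faces L (Suc N) = {}" using bnd by (force simp: faces_def)
      then show "c = 0" using c by (auto simp: ch_def chains_def fun_eq_iff)
    qed (rule zero_ch)
    moreover have "bd L (Suc N) (0 :: 'v set \<Rightarrow> 'k) = 0" by (simp add: bd_def fun_eq_iff)
    ultimately have "bd L (Suc N) ` ch (Suc N) = {0}" by simp
    then show ?thesis by (simp add: r_def V_dim_zero)
  qed
  have le: "r (Suc j) \<le> z j" for j
    unfolding r_def z_def
  proof (rule V.dim_le_of_subset)
    show "bd L (Suc j) ` ch (Suc j) \<subseteq> {c \<in> ch j. bd L j c = 0}"
    proof safe
      fix c assume c: "c \<in> ch (Suc j)"
      show "bd L (Suc j) c \<in> ch j" by (auto simp: ch_def chains_def bd_def)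
      show "bd L j (bd L (Suc j) c) = 0"
      proof (cases j)
        case 0 then show ?thesis by (simp add: bd_def fun_eq_iff)
      next
        case (Suc j') then show ?thesis using bd_bd[OF dc, of c j'] c by (simp add: ch_def)
      qed
    qed
    show "{c \<in> ch j. bd L j c = 0} \<subseteq> V.span (indf ` faces L j)"
      using dim_chains(2)[OF finL, of j] by (auto simp: ch_def)
    show "finite (indf ` faces L j)" using finL by (simp add: faces_def)
  qed
  have hom: "z j - r (Suc j) = (if j = d then 1 else 0)" for j
    using sh unfolding sphere_homology_def rbetti_def z_def r_def ch_def by simp
  have cj: "int (card (faces L j)) = int (r (Suc j)) + int (r j) + (if j = d then 1 else 0)" for j
    using rn[of j] hom[of j] le[of j] by (auto split: if_splits)
  have "(\<Sum>\<rho>\<in>L. (-1::int) ^ card \<rho>) = (\<Sum>j\<le>N. \<Sum>\<rho>\<in>{\<rho>\<in>L. card \<rho> = j}. (-1::int) ^ card \<rho>)"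
    by (rule sum.group[symmetric]) (use finL bnd in auto)
  also have "\<dots> = (\<Sum>j\<le>N. (-1::int) ^ j * int (card (faces L j)))"
    by (intro sum.cong refl) (simp add: faces_def)
  also have "\<dots> = (\<Sum>j\<le>N. (-1::int)^j * (int (r (Suc j)) + int (r j)) + (if j = d then (-1)^j else 0))"
    by (intro sum.cong refl) (simp add: cj algebra_simps)
  also have "\<dots> = (-1)^N * r (Suc N) + r 0 + (-1)^d"
    using dN by (simp add: sum.distrib tele)
  also have "\<dots> = (-1)^d" by (simp add: rN r0)
  finally show ?thesis .
qed


lemma sc_finite: "simplicial_complex X \<Longrightarrow> finite X"
  by (simp add: simplicial_complex_def)

lemma sc_dcl:
  assumes "simplicial_complex X" "\<sigma> \<in> X" "\<tau> \<subseteq> \<sigma>" shows "\<tau> \<in> X"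
proof -
  have h: "\<forall>\<sigma>\<in>X. \<forall>\<tau>. \<tau> \<subseteq> \<sigma> \<longrightarrow> \<tau> \<in> X" using assms(1) by (simp add: simplicial_complex_def)
  show ?thesis using bspec[OF h assms(2)] assms(3) by blast
qed

lemma sc_face_finite:
  assumes sc: "simplicial_complex X" and s: "\<sigma> \<in> X"
  shows "finite \<sigma>"
proof -
  have "Pow \<sigma> \<subseteq> X" using sc_dcl[OF sc s] by auto
  then have "finite (Pow \<sigma>)" using sc_finite[OF sc] by (rule finite_subset)
  then show ?thesis by simp
qed

lemma link_dclosed:
  assumes sc: "simplicial_complex X" and s: "\<sigma> \<in> X"
  shows "dclosed (link X \<sigma>)"
  unfolding dclosed_def
proof (intro conjI ballI allI impI)
  show "finite (link X \<sigma>)" using sc_finite[OF sc] by (rule rev_finite_subset) (auto simp: link_def)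
next
  fix \<rho> assume "\<rho> \<in> link X \<sigma>"
  then show "finite \<rho>" using sc_face_finite[OF sc] by (auto simp: link_def)
next
  fix \<rho> \<tau> assume r: "\<rho> \<in> link X \<sigma>" and t: "\<tau> \<subseteq> \<rho>"
  have 1: "\<rho> \<in> X" "\<sigma> \<union> \<rho> \<in> X" "\<sigma> \<inter> \<rho> = {}" using r by (auto simp: link_def)
  have "\<tau> \<in> X" by (rule sc_dcl[OF sc 1(1) t])
  moreover have "\<sigma> \<union> \<tau> \<in> X" by (rule sc_dcl[OF sc 1(2)]) (use t in auto)
  moreover have "\<sigma> \<inter> \<tau> = {}" using 1(3) t by auto
  ultimately show "\<tau> \<in> link X \<sigma>" by (simp add: link_def)
qed

lemma ghs_sc: "gen_homology_sphere K X m \<Longrightarrow> simplicial_complex X"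
  by (simp add: gen_homology_sphere_def)

lemma ghs_card: "gen_homology_sphere K X m \<Longrightarrow> \<sigma> \<in> X \<Longrightarrow> card \<sigma> \<le> m"
  by (simp add: gen_homology_sphere_def)

lemma link_euler:
  fixes X :: "'v::linorder set set"
  assumes g: "gen_homology_sphere TYPE('k::field) X m" and s: "\<sigma> \<in> X"
  shows "(\<Sum>\<rho>\<in>link X \<sigma>. (-1::int) ^ card \<rho>) = (-1) ^ (m - card \<sigma>)"
proof (rule euler_poincare[where N = m])
  show "dclosed (link X \<sigma>)" by (rule link_dclosed[OF ghs_sc[OF g] s])
  show "\<forall>\<rho>\<in>link X \<sigma>. card \<rho> \<le> m" using ghs_card[OF g] by (auto simp: link_def)
  show "m - card \<sigma> \<le> m" by simp
  show "sphere_homology TYPE('k) (link X \<sigma>) (m - card \<sigma>)"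
    using g s by (simp add: gen_homology_sphere_def)
qed

lemma eulerian:
  fixes X :: "'v::linorder set set"
  assumes g: "gen_homology_sphere TYPE('k::field) X m" and s: "\<sigma> \<in> X"
  shows "(\<Sum>\<tau>\<in>{\<tau>\<in>X. \<sigma> \<subseteq> \<tau>}. (-1::int) ^ card \<tau>) = (-1) ^ m"
proof -
  have sc: "simplicial_complex X" by (rule ghs_sc[OF g])
  have img: "{\<tau>\<in>X. \<sigma> \<subseteq> \<tau>} = (\<lambda>\<rho>. \<sigma> \<union> \<rho>) ` link X \<sigma>"
  proof safe
    fix \<tau> assume t: "\<tau> \<in> X" "\<sigma> \<subseteq> \<tau>"
    have "\<tau> - \<sigma> \<in> link X \<sigma>" unfolding link_def
      using t sc_dcl[OF sc t(1), of "\<tau> - \<sigma>"] by (auto simp: Un_absorb1 Un_Diff_cancel)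
    moreover have "\<tau> = \<sigma> \<union> (\<tau> - \<sigma>)" using t by auto
    ultimately show "\<tau> \<in> (\<lambda>\<rho>. \<sigma> \<union> \<rho>) ` link X \<sigma>" by blast
  qed (auto simp: link_def)
  have inj: "inj_on (\<lambda>\<rho>. \<sigma> \<union> \<rho>) (link X \<sigma>)"
  proof (rule inj_onI)
    fix a b assume a: "a \<in> link X \<sigma>" and b: "b \<in> link X \<sigma>" and e: "\<sigma> \<union> a = \<sigma> \<union> b"
    have "a = (\<sigma> \<union> a) - \<sigma>" "b = (\<sigma> \<union> b) - \<sigma>" using a b by (auto simp: link_def)
    then show "a = b" using e by simp
  qed
  have fs: "finite \<sigma>" by (rule sc_face_finite[OF sc s])
  have "(\<Sum>\<tau>\<in>{\<tau>\<in>X. \<sigma> \<subseteq> \<tau>}. (-1::int) ^ card \<tau>) = (\<Sum>\<rho>\<in>link X \<sigma>. (-1::int) ^ card (\<sigma> \<union> \<rho>))"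
    unfolding img by (rule sum.reindex[OF inj, unfolded comp_def])
  also have "\<dots> = (\<Sum>\<rho>\<in>link X \<sigma>. (-1::int) ^ card \<sigma> * (-1) ^ card \<rho>)"
  proof (intro sum.cong refl)
    fix \<rho> assume r: "\<rho> \<in> link X \<sigma>"
    have "finite \<rho>" "\<sigma> \<inter> \<rho> = {}" using r sc_face_finite[OF sc] by (auto simp: link_def)
    then have "card (\<sigma> \<union> \<rho>) = card \<sigma> + card \<rho>" using fs by (simp add: card_Un_disjoint)
    then show "(-1::int) ^ card (\<sigma> \<union> \<rho>) = (-1) ^ card \<sigma> * (-1) ^ card \<rho>" by (simp add: power_add)
  qed
  also have "\<dots> = (-1) ^ card \<sigma> * (\<Sum>\<rho>\<in>link X \<sigma>. (-1::int) ^ card \<rho>)"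
    by (rule sum_distrib_left[symmetric])
  also have "\<dots> = (-1) ^ card \<sigma> * (-1) ^ (m - card \<sigma>)"
    by (simp only: link_euler[OF g s])
  also have "\<dots> = (-1) ^ (card \<sigma> + (m - card \<sigma>))"
    by (rule power_add[symmetric])
  also have "card \<sigma> + (m - card \<sigma>) = m" using ghs_card[OF g s] by simp
  finally show ?thesis .
qed

lemma f_ident:
  fixes X :: "'v::linorder set set" and x :: real
  assumes g: "gen_homology_sphere TYPE('k::field) X m"
  shows "(\<Sum>\<tau>\<in>X. (-1-x) ^ card \<tau>) = (-1) ^ m * (\<Sum>\<sigma>\<in>X. x ^ card \<sigma>)"
proof -
  have sc: "simplicial_complex X" by (rule ghs_sc[OF g])
  have finX: "finite X" using sc_finite[OF sc] .
  have pw: "(1 + x) ^ card \<tau> = (\<Sum>S\<in>{S\<in>X. S \<subseteq> \<tau>}. x ^ card S)" if t: "\<tau> \<in> X" for \<tau>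
  proof -
    have ft: "finite \<tau>" by (rule sc_face_finite[OF sc t])
    have "(1 + x) ^ card \<tau> = (\<Prod>y\<in>\<tau>. x + 1)" by (simp add: add.commute)
    also have "\<dots> = (\<Sum>S\<in>Pow \<tau>. (\<Prod>y\<in>S. x) * (\<Prod>y\<in>\<tau>-S. 1))" by (rule prod_add[OF ft])
    also have "\<dots> = (\<Sum>S\<in>Pow \<tau>. x ^ card S)" by simp
    also have "Pow \<tau> = {S\<in>X. S \<subseteq> \<tau>}" using sc_dcl[OF sc t] by auto
    finally show ?thesis .
  qed
  have "(\<Sum>\<tau>\<in>X. (-1-x) ^ card \<tau>) = (\<Sum>\<tau>\<in>X. \<Sum>S\<in>{S\<in>X. S \<subseteq> \<tau>}. (-1) ^ card \<tau> * x ^ card S)"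
  proof (intro sum.cong refl)
    fix \<tau> assume t: "\<tau> \<in> X"
    have "(-1-x) ^ card \<tau> = (-1) ^ card \<tau> * (1 + x) ^ card \<tau>"
      by (simp add: power_mult_distrib[symmetric])
    then show "(-1-x) ^ card \<tau> = (\<Sum>S\<in>{S\<in>X. S \<subseteq> \<tau>}. (-1) ^ card \<tau> * x ^ card S)"
      by (simp add: pw[OF t] sum_distrib_left)
  qed
  also have "\<dots> = (\<Sum>S\<in>X. \<Sum>\<tau>\<in>{\<tau>\<in>X. S \<subseteq> \<tau>}. (-1) ^ card \<tau> * x ^ card S)"
    by (rule sum.swap_restrict[OF finX finX])
  also have "\<dots> = (\<Sum>S\<in>X. x ^ card S * (\<Sum>\<tau>\<in>{\<tau>\<in>X. S \<subseteq> \<tau>}. (-1::real) ^ card \<tau>))"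
    by (simp add: sum_distrib_left sum_distrib_right mult.commute)
  also have "\<dots> = (\<Sum>S\<in>X. x ^ card S * (-1) ^ m)"
  proof (intro sum.cong refl)
    fix S assume S: "S \<in> X"
    have "(\<Sum>\<tau>\<in>{\<tau>\<in>X. S \<subseteq> \<tau>}. (-1::real) ^ card \<tau>) = of_int (\<Sum>\<tau>\<in>{\<tau>\<in>X. S \<subseteq> \<tau>}. (-1::int) ^ card \<tau>)"
      by simp
    also have "\<dots> = (-1) ^ m" by (simp add: eulerian[OF g S])
    finally show "x ^ card S * (\<Sum>\<tau>\<in>{\<tau>\<in>X. S \<subseteq> \<tau>}. (-1::real) ^ card \<tau>) = x ^ card S * (-1) ^ m" by simp
  qed
  also have "\<dots> = (-1) ^ m * (\<Sum>\<sigma>\<in>X. x ^ card \<sigma>)" by (simp add: sum_distrib_left mult.commute)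
  finally show ?thesis .
qed


lemma poly_eq_inf:
  fixes p q :: "real poly"
  assumes inf: "infinite S" and eq: "\<And>x. x \<in> S \<Longrightarrow> poly p x = poly q x"
  shows "p = q"
proof (rule ccontr)
  assume "p \<noteq> q"
  then have "p - q \<noteq> 0" by simp
  then have "finite {x. poly (p - q) x = 0}" by (rule poly_roots_finite)
  moreover have "S \<subseteq> {x. poly (p - q) x = 0}" using eq by auto
  ultimately show False using inf finite_subset by blast
qed

definition HP :: "'v set set \<Rightarrow> nat \<Rightarrow> real poly" where
  "HP Y M = (\<Sum>\<sigma>\<in>Y. [:0,1:] ^ card \<sigma> * [:1,-1:] ^ (M - card \<sigma>))"

lemma poly_HP: "poly (HP Y M) s = (\<Sum>\<sigma>\<in>Y. s ^ card \<sigma> * (1 - s) ^ (M - card \<sigma>))"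
  by (simp add: HP_def poly_sum)

lemma poly_f: "poly (f_poly Y) y = (\<Sum>\<sigma>\<in>Y. y ^ card \<sigma>)"
  by (simp add: f_poly_def poly_sum poly_monom)

lemma term1:
  fixes t :: real
  assumes "k \<le> M" "t \<noteq> 0" "t \<noteq> -1"
  shows "(1+t)^M * ((1/(1+t))^k * (1 - 1/(1+t))^(M-k)) = t^M * (1/t)^k"
proof -
  obtain j where M: "M = k + j" using assms(1) le_Suc_ex by blast
  have t1: "1 + t \<noteq> 0" using assms(3) by (metis add.commute add_eq_0_iff)
  have e: "1 - 1/(1+t) = t/(1+t)" using t1 by (simp add: field_simps)
  show ?thesis unfolding M e using t1 assms(2)
    by (simp add: power_add power_divide field_simps)
qed

lemma h_poly_eq:
  assumes bnd: "\<forall>\<sigma>\<in>Y. card \<sigma> \<le> M"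
  shows "h_poly Y M = HP Y M"
  unfolding h_poly_def
proof (rule the_equality)
  show "\<forall>t::real. t \<noteq> 0 \<and> t \<noteq> -1 \<longrightarrow> (1 + t) ^ M * poly (HP Y M) (1 / (1 + t)) = t ^ M * poly (f_poly Y) (1 / t)"
  proof (intro allI impI)
    fix t :: real assume t: "t \<noteq> 0 \<and> t \<noteq> -1"
    have "(1 + t) ^ M * poly (HP Y M) (1 / (1 + t)) = (\<Sum>\<sigma>\<in>Y. (1+t)^M * ((1/(1+t))^card \<sigma> * (1 - 1/(1+t))^(M - card \<sigma>)))"
      by (simp add: poly_HP sum_distrib_left)
    also have "\<dots> = (\<Sum>\<sigma>\<in>Y. t^M * (1/t)^card \<sigma>)"
      using bnd t by (intro sum.cong refl term1) auto
    also have "\<dots> = t ^ M * poly (f_poly Y) (1 / t)" by (simp add: poly_f sum_distrib_left)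
    finally show "(1 + t) ^ M * poly (HP Y M) (1 / (1 + t)) = t ^ M * poly (f_poly Y) (1 / t)" .
  qed
next
  fix h assume h: "\<forall>t::real. t \<noteq> 0 \<and> t \<noteq> -1 \<longrightarrow> (1 + t) ^ M * poly h (1 / (1 + t)) = t ^ M * poly (f_poly Y) (1 / t)"
  have hp: "\<forall>t::real. t \<noteq> 0 \<and> t \<noteq> -1 \<longrightarrow> (1 + t) ^ M * poly (HP Y M) (1 / (1 + t)) = t ^ M * poly (f_poly Y) (1 / t)"
  proof (intro allI impI)
    fix t :: real assume t: "t \<noteq> 0 \<and> t \<noteq> -1"
    have "(1 + t) ^ M * poly (HP Y M) (1 / (1 + t)) = (\<Sum>\<sigma>\<in>Y. (1+t)^M * ((1/(1+t))^card \<sigma> * (1 - 1/(1+t))^(M - card \<sigma>)))"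
      by (simp add: poly_HP sum_distrib_left)
    also have "\<dots> = (\<Sum>\<sigma>\<in>Y. t^M * (1/t)^card \<sigma>)"
      using bnd t by (intro sum.cong refl term1) auto
    also have "\<dots> = t ^ M * poly (f_poly Y) (1 / t)" by (simp add: poly_f sum_distrib_left)
    finally show "(1 + t) ^ M * poly (HP Y M) (1 / (1 + t)) = t ^ M * poly (f_poly Y) (1 / t)" .
  qed
  show "h = HP Y M"
  proof (rule poly_eq_inf[of "{0<..<1}"])
    show "infinite {0<..<(1::real)}" by simp
  next
    fix s :: real assume s: "s \<in> {0<..<1}"
    define t where "t = 1/s - 1"
    have s0: "s \<noteq> 0" using s by auto
    have tpos: "t > 0" using s by (simp add: t_def field_simps)
    have st: "1 / (1 + t) = s" using s0 by (simp add: t_def)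
    have "t \<noteq> 0 \<and> t \<noteq> -1" using tpos by auto
    then have "(1 + t) ^ M * poly h s = (1 + t) ^ M * poly (HP Y M) s"
      using h hp st by metis
    moreover have "(1 + t) ^ M \<noteq> 0" using tpos by simp
    ultimately show "poly h s = poly (HP Y M) s" using tpos by simp
  qed
qed

lemma degree_HP:
  assumes bnd: "\<forall>\<sigma>\<in>Y. card \<sigma> \<le> M" and fin: "finite Y"
  shows "degree (HP Y M) \<le> M"
  unfolding HP_def
proof (rule degree_sum_le[OF fin])
  fix \<sigma> assume s: "\<sigma> \<in> Y"
  have "degree ([:0,1:] ^ card \<sigma> * [:1,-1::real:] ^ (M - card \<sigma>)) \<le> degree ([:0,1::real:] ^ card \<sigma>) + degree ([:1,-1::real:] ^ (M - card \<sigma>))"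
    by (rule degree_mult_le)
  also have "\<dots> \<le> card \<sigma> + (M - card \<sigma>)"
    by (intro add_mono order.trans[OF degree_power_le]) auto
  also have "\<dots> = M" using bnd s by simp
  finally show "degree ([:0,1:] ^ card \<sigma> * [:1,-1::real:] ^ (M - card \<sigma>)) \<le> M" .
qed

lemma poly_upto:
  fixes p :: "'a::comm_semiring_1 poly"
  assumes "degree p \<le> n"
  shows "poly p x = (\<Sum>i\<le>n. coeff p i * x ^ i)"
proof -
  have "poly p x = (\<Sum>i\<le>degree p. coeff p i * x ^ i)" by (rule poly_altdef)
  also have "\<dots> = (\<Sum>i\<le>n. coeff p i * x ^ i)"
    using assms by (intro sum.mono_neutral_left) (auto simp: coeff_eq_0)
  finally show ?thesis .
qed

lemma pal_coeffs:
  fixes p :: "real poly"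
  assumes deg: "degree p \<le> m" and fe: "\<And>s. s \<noteq> 0 \<Longrightarrow> s \<noteq> 1 \<Longrightarrow> poly p s = s ^ m * poly p (1/s)"
  shows "coeff p i = (if i \<le> m then coeff p (m - i) else 0)"
proof -
  define R where "R = (\<Sum>i\<le>m. monom (coeff p (m - i)) i)"
  have "p = R"
  proof (rule poly_eq_inf[of "{1<..<2}"])
    show "infinite {(1::real)<..<2}" by simp
  next
    fix s :: real assume s: "s \<in> {1<..<2}"
    then have s0: "s \<noteq> 0" "s \<noteq> 1" by auto
    have pu: "poly p (1/s) = (\<Sum>j\<le>m. coeff p j * (1/s) ^ j)" by (rule poly_upto[OF deg])
    have "poly p s = s ^ m * (\<Sum>j\<le>m. coeff p j * (1/s) ^ j)" unfolding pu[symmetric] by (rule fe[OF s0])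
    also have "\<dots> = (\<Sum>j\<le>m. coeff p j * s ^ (m - j))"
    proof -
      have "s ^ m * (coeff p j * (1/s) ^ j) = coeff p j * s ^ (m - j)" if jle: "j \<le> m" for j
      proof -
        obtain k where "m = j + k" using le_Suc_ex[OF jle] by blast
        then show ?thesis using s0 by (simp add: power_add power_one_over)
      qed
      then have "(\<Sum>j\<le>m. s ^ m * (coeff p j * (1/s) ^ j)) = (\<Sum>j\<le>m. coeff p j * s ^ (m - j))"
        by (intro sum.cong refl) auto
      then show ?thesis by (simp add: sum_distrib_left)
    qed
    also have "\<dots> = (\<Sum>i\<le>m. coeff p (m - i) * s ^ i)"
    proof -
      have "(\<Sum>j\<in>{0..m}. coeff p j * s ^ (m - j)) = (\<Sum>i\<in>{0..m}. coeff p (m + 0 - i) * s ^ (m - (m + 0 - i)))"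
        by (rule sum.atLeastAtMost_rev)
      also have "\<dots> = (\<Sum>i\<in>{0..m}. coeff p (m - i) * s ^ i)"
        by (intro sum.cong refl) auto
      finally show ?thesis by (simp add: atLeast0AtMost)
    qed
    also have "\<dots> = poly R s" by (simp add: R_def poly_sum poly_monom)
    finally show "poly p s = poly R s" .
  qed
  have "coeff R i = (if i \<le> m then coeff p (m - i) else 0)"
  proof (cases "i \<le> m")
    case True
    then show ?thesis unfolding R_def by (simp add: coeff_sum_monom)
  next
    case False
    then show ?thesis unfolding R_def by (auto simp: coeff_sum coeff_monom intro!: sum.neutral)
  qed
  then show ?thesis using \<open>p = R\<close> by simp
qed


definition GP :: "nat \<Rightarrow> real poly \<Rightarrow> real poly" where
  "GP m g = (\<Sum>i\<le>m div 2. smult (coeff g i) ([:0,1:] ^ i * [:1,1:] ^ (m - 2 * i)))"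

definition palc :: "nat \<Rightarrow> real poly \<Rightarrow> bool" where
  "palc m h \<longleftrightarrow> (\<forall>i. coeff h i = (if i \<le> m then coeff h (m - i) else 0))"

lemma coeff_11_pow: "coeff ([:1,1::real:] ^ m) i = (if i \<le> m then of_nat (m choose i) else 0)"
proof (cases "i \<le> m")
  case True then show ?thesis by (simp add: coeff_linear_poly_power)
next
  case False
  have "degree ([:1,1::real:] ^ m) = m" using degree_linear_power[of "1::real" m] by simp
  then show ?thesis using False by (simp add: coeff_eq_0)
qed

lemma X_mult: "[:0,1:] * p = pCons 0 (p :: real poly)" by simp

lemma gamma_exists: "palc m h \<Longrightarrow> \<exists>g. degree g \<le> m div 2 \<and> h = GP m g"
proof (induction m arbitrary: h rule: less_induct)
  case (less m)
  have pal: "\<And>i. coeff h i = (if i \<le> m then coeff h (m - i) else 0)" using less.prems by (simp add: palc_def)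
  consider "m = 0" | "m = 1" | m' where "m = Suc (Suc m')" by (metis One_nat_def not0_implies_Suc)
  then show ?case
  proof cases
    case 1
    have "h = GP m [:coeff h 0:]"
    proof (rule poly_eqI)
      fix n show "coeff h n = coeff (GP m [:coeff h 0:]) n"
        using pal[of n] 1 by (cases n) (auto simp: GP_def)
    qed
    then show ?thesis by (intro exI[of _ "[:coeff h 0:]"]) simp
  next
    case 2
    have "h = GP m [:coeff h 0:]"
    proof (rule poly_eqI)
      fix n
      have "GP m [:coeff h 0:] = smult (coeff h 0) [:1,1:]" using 2 by (simp add: GP_def)
      then show "coeff h n = coeff (GP m [:coeff h 0:]) n"
        using pal[of n] 2 by (cases n) (auto simp: coeff_pCons split: nat.split)
    qed
    then show ?thesis by (intro exI[of _ "[:coeff h 0:]"]) simp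
  next
    case 3
    define c where "c = coeff h 0"
    define h1 where "h1 = h - smult c ([:1,1:] ^ m)"
    have c1: "coeff h1 i = coeff h i - c * (if i \<le> m then of_nat (m choose i) else 0)" for i
      by (simp add: h1_def coeff_11_pow)
    have pal1: "coeff h1 i = (if i \<le> m then coeff h1 (m - i) else 0)" for i
    proof (cases "i \<le> m")
      case True
      have "m choose i = m choose (m - i)" using True by (rule binomial_symmetric)
      then show ?thesis using True pal[of i] by (simp add: c1)
    next
      case False then show ?thesis using pal[of i] by (simp add: c1)
    qed
    have h10: "coeff h1 0 = 0" by (simp add: c1 c_def)
    obtain a h2 where h1e: "h1 = pCons a h2" by (cases h1) simp
    have "a = 0" using h10 h1e by simp
    then have h1e: "h1 = pCons 0 h2" using h1e by simp
    have pal2: "palc m' h2" unfolding palc_def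
    proof
      fix i
      have e: "coeff h2 i = coeff h1 (Suc i)" using h1e by simp
      show "coeff h2 i = (if i \<le> m' then coeff h2 (m' - i) else 0)"
      proof (cases "i \<le> m'")
        case True
        have "m - Suc i = Suc (m' - i)" using True 3 by simp
        then show ?thesis using True 3 e pal1[of "Suc i"] h1e by simp
      next
        case False
        show ?thesis
        proof (cases "i = Suc m'")
          case True
          then show ?thesis using 3 e pal1[of "Suc i"] h10 by simp
        next
          case False
          then show ?thesis using \<open>\<not> i \<le> m'\<close> 3 e pal1[of "Suc i"] by simp
        qed
      qed
    qed
    obtain g2 where g2: "degree g2 \<le> m' div 2" "h2 = GP m' g2"
      using less.IH[of m' h2] pal2 3 by auto
    define g where "g = pCons c g2"
    have md: "m div 2 = Suc (m' div 2)" using 3 by simp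
    have "degree g \<le> m div 2"
      using degree_pCons_le[of c g2] g2(1) md unfolding g_def by linarith
    moreover have "h = GP m g"
    proof -
      have "GP m g = (\<Sum>i\<le>Suc (m' div 2). smult (coeff g i) ([:0,1:] ^ i * [:1,1:] ^ (m - 2 * i)))"
        by (simp add: GP_def md)
      also have "\<dots> = smult (coeff g 0) ([:0,1:] ^ 0 * [:1,1:] ^ (m - 2 * 0)) + (\<Sum>i\<le>m' div 2. smult (coeff g (Suc i)) ([:0,1:] ^ Suc i * [:1,1:] ^ (m - 2 * Suc i)))"
        by (rule sum.atMost_Suc_shift)
      also have "(\<Sum>i\<le>m' div 2. smult (coeff g (Suc i)) ([:0,1:] ^ Suc i * [:1,1:] ^ (m - 2 * Suc i)))
          = [:0,1:] * (\<Sum>i\<le>m' div 2. smult (coeff g2 i) ([:0,1:] ^ i * [:1,1:] ^ (m' - 2 * i)))"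
        unfolding sum_distrib_left
      proof (intro sum.cong refl)
        fix i
        have "m - 2 * Suc i = m' - 2 * i" using 3 by simp
        then show "smult (coeff g (Suc i)) ([:0,1:] ^ Suc i * [:1,1:] ^ (m - 2 * Suc i))
            = [:0,1:] * smult (coeff g2 i) ([:0,1:] ^ i * [:1,1:] ^ (m' - 2 * i))"
          by (simp add: g_def mult.assoc del: mult_pCons_left)
      qed
      also have "\<dots> = pCons 0 h2" using g2(2) by (simp add: GP_def X_mult)
      also have "smult (coeff g 0) ([:0,1:] ^ 0 * [:1,1:] ^ (m - 2 * 0)) = smult c ([:1,1:] ^ m)"
        by (simp add: g_def)
      finally have "GP m g = smult c ([:1,1:] ^ m) + h1" using h1e by simp
      then show ?thesis by (simp add: h1_def)
    qed
    ultimately show ?thesis by blast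
  qed
qed

lemma GP_poly:
  assumes deg: "degree g \<le> m div 2" and t: "t \<noteq> -1"
  shows "poly (GP m g) t = (1 + t) ^ m * poly g (t / (1 + t) ^ 2)"
proof -
  have t1: "1 + t \<noteq> 0" using t by (metis add.commute add_eq_0_iff)
  have "poly (GP m g) t = (\<Sum>i\<le>m div 2. coeff g i * (t ^ i * (1 + t) ^ (m - 2 * i)))"
    by (simp add: GP_def poly_sum)
  also have "\<dots> = (\<Sum>i\<le>m div 2. (1 + t) ^ m * (coeff g i * (t / (1 + t) ^ 2) ^ i))"
  proof (intro sum.cong refl)
    fix i assume "i \<in> {..m div 2}"
    then have "2 * i \<le> m" by auto
    then obtain j where mj: "m = 2 * i + j" using le_Suc_ex by blast
    have "(1 + t) ^ m * (t / (1 + t) ^ 2) ^ i = t ^ i * (1 + t) ^ j"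
      unfolding mj using t1 by (simp add: power_add power_mult power_divide)
    then show "coeff g i * (t ^ i * (1 + t) ^ (m - 2 * i)) = (1 + t) ^ m * (coeff g i * (t / (1 + t) ^ 2) ^ i)"
      using mj by (simp add: algebra_simps)
  qed
  also have "\<dots> = (1 + t) ^ m * poly g (t / (1 + t) ^ 2)"
    by (simp add: poly_upto[OF deg] sum_distrib_left)
  finally show ?thesis .
qed

lemma phi_inj: "inj_on (\<lambda>t::real. t / (1 + t) ^ 2) {0<..<1}"
proof (rule inj_onI)
  fix a b :: real assume a: "a \<in> {0<..<1}" and b: "b \<in> {0<..<1}"
    and e: "a / (1 + a) ^ 2 = b / (1 + b) ^ 2"
  have pa: "(1 + a) ^ 2 \<noteq> 0" "(1 + b) ^ 2 \<noteq> 0" using a b by auto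
  have "a * (1 + b) ^ 2 = b * (1 + a) ^ 2" using e pa by (simp add: field_simps)
  then have "(a - b) * (1 - a * b) = 0" by (simp add: algebra_simps power2_eq_square)
  moreover have "a * b < 1 * 1" using a b by (intro mult_strict_mono) auto
  ultimately show "a = b" by simp
qed

lemma gamma_eq:
  assumes hg: "h_poly X m = GP m g" and deg: "degree g \<le> m div 2"
  shows "gamma_poly X m = g"
  unfolding gamma_poly_def
proof (rule the_equality)
  show "degree g \<le> m div 2 \<and> (\<forall>t::real. t \<noteq> -1 \<longrightarrow> poly (h_poly X m) t = (1 + t) ^ m * poly g (t / (1 + t) ^ 2))"
    using deg GP_poly[OF deg] hg by simp
next
  fix g' assume g': "degree g' \<le> m div 2 \<and> (\<forall>t::real. t \<noteq> -1 \<longrightarrow> poly (h_poly X m) t = (1 + t) ^ m * poly g' (t / (1 + t) ^ 2))"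
  let ?S = "(\<lambda>t::real. t / (1 + t) ^ 2) ` {0<..<1}"
  show "g' = g"
  proof (rule poly_eq_inf[of ?S])
    show "infinite ?S"
    proof
      assume "finite ?S"
      then have "finite {0<..<(1::real)}" using finite_imageD[OF _ phi_inj] by blast
      moreover have "infinite {0<..<(1::real)}" by simp
      ultimately show False by blast
    qed
  next
    fix x assume "x \<in> ?S"
    then obtain t where t: "t \<in> {0<..<1}" "x = t / (1 + t) ^ 2" by auto
    have tn: "t \<noteq> -1" using t by auto
    have "(1 + t) ^ m * poly g' x = (1 + t) ^ m * poly g x"
      using g' GP_poly[OF deg tn] hg tn t(2) by simp
    moreover have "(1 + t) ^ m \<noteq> 0" using t by simp
    ultimately show "poly g' x = poly g x" using t(1) by simp
  qed
qed


lemma termA: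
  fixes s :: real
  assumes "k \<le> m" "s \<noteq> 1"
  shows "s ^ k * (1 - s) ^ (m - k) = (1 - s) ^ m * (s / (1 - s)) ^ k"
proof -
  obtain j where mj: "m = k + j" using le_Suc_ex[OF assms(1)] by blast
  have "1 - s \<noteq> 0" using assms(2) by simp
  then show ?thesis unfolding mj by (simp add: power_add power_divide)
qed

lemma termB:
  fixes s :: real
  assumes "k \<le> m" "s \<noteq> 1"
  shows "(1 - s) ^ m * (-1) ^ m * (1 / (s - 1)) ^ k = (s - 1) ^ (m - k)"
proof -
  obtain j where mj: "m = k + j" using le_Suc_ex[OF assms(1)] by blast
  have ne: "s - 1 \<noteq> 0" using assms(2) by simp
  have "(1 - s) ^ m * (-1) ^ m = (s - 1) ^ m" by (simp add: power_mult_distrib[symmetric])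
  then have "(1 - s) ^ m * (-1) ^ m * (1 / (s - 1)) ^ k = (s - 1) ^ (k + j) * (1 / (s - 1)) ^ k"
    unfolding mj by simp
  also have "\<dots> = (s - 1) ^ j" using ne by (simp add: power_add power_one_over)
  finally show ?thesis unfolding mj by simp
qed

lemma termC:
  fixes s :: real
  assumes "k \<le> m" "s \<noteq> 0"
  shows "s ^ m * ((1 / s) ^ k * (1 - 1 / s) ^ (m - k)) = (s - 1) ^ (m - k)"
proof -
  obtain j where mj: "m = k + j" using le_Suc_ex[OF assms(1)] by blast
  have e: "1 - 1 / s = (s - 1) / s" using assms(2) by (simp add: field_simps)
  show ?thesis unfolding mj e using assms(2) by (simp add: power_add power_divide power_one_over)
qed

lemma HP_pal_fun:
  fixes X :: "'v::linorder set set" and s :: real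
  assumes g: "gen_homology_sphere TYPE('k::field) X m" and s: "s \<noteq> 0" "s \<noteq> 1"
  shows "poly (HP X m) s = s ^ m * poly (HP X m) (1 / s)"
proof -
  have bnd: "\<And>\<sigma>. \<sigma> \<in> X \<Longrightarrow> card \<sigma> \<le> m" using ghs_card[OF g] by blast
  define x where "x = s / (1 - s)"
  have mx: "-1 - x = 1 / (s - 1)" using s(2) unfolding x_def by (simp add: field_simps)
  have fi: "(\<Sum>\<tau>\<in>X. (-1-x) ^ card \<tau>) = (-1) ^ m * (\<Sum>\<sigma>\<in>X. x ^ card \<sigma>)" by (rule f_ident[OF g])
  have fi2: "(\<Sum>\<sigma>\<in>X. x ^ card \<sigma>) = (-1) ^ m * (\<Sum>\<tau>\<in>X. (-1-x) ^ card \<tau>)"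
  proof -
    have "(-1::real) ^ m * (-1) ^ m = 1" by (simp add: power_mult_distrib[symmetric])
    then show ?thesis unfolding fi by (simp add: mult.assoc[symmetric])
  qed
  have "poly (HP X m) s = (\<Sum>\<sigma>\<in>X. (1 - s) ^ m * x ^ card \<sigma>)"
    unfolding poly_HP x_def using bnd s by (intro sum.cong refl termA) auto
  also have "\<dots> = (1 - s) ^ m * ((-1) ^ m * (\<Sum>\<tau>\<in>X. (1 / (s - 1)) ^ card \<tau>))"
    by (simp add: sum_distrib_left[symmetric] fi2 mx)
  also have "\<dots> = (\<Sum>\<tau>\<in>X. (1 - s) ^ m * (-1) ^ m * (1 / (s - 1)) ^ card \<tau>)"
    by (simp add: sum_distrib_left mult.assoc)
  also have "\<dots> = (\<Sum>\<tau>\<in>X. (s - 1) ^ (m - card \<tau>))"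
    using bnd s by (intro sum.cong refl termB) auto
  also have "\<dots> = (\<Sum>\<tau>\<in>X. s ^ m * ((1 / s) ^ card \<tau> * (1 - 1 / s) ^ (m - card \<tau>)))"
    using bnd s by (intro sum.cong refl termC[symmetric]) auto
  also have "\<dots> = s ^ m * poly (HP X m) (1 / s)"
    unfolding poly_HP by (simp add: sum_distrib_left)
  finally show ?thesis .
qed


lemma pderiv_sum': "pderiv (\<Sum>x\<in>A. f x) = (\<Sum>x\<in>A. pderiv (f x))"
  by (induct A rule: infinite_finite_induct) (auto simp: pderiv_add)

lemma D_term:
  fixes k j :: nat
  shows "2 * poly (pderiv ([:0,1:] ^ k * [:1,-1:] ^ j)) (-1::real)
       = of_nat k * (-1) ^ (k - 1) * 2 ^ j - of_nat (k + j) * (-1) ^ k * 2 ^ j"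
proof -
  have pA: "pderiv [:0,1::real:] = [:1:]" by (simp add: pderiv_pCons)
  have pB: "pderiv [:1,-1::real:] = [:-1:]" by (simp add: pderiv_pCons)
  have e: "poly (pderiv ([:0,1:] ^ k * [:1,-1:] ^ j)) (-1::real)
      = (-1) ^ k * (of_nat j * (2 ^ (j - 1) * (-1))) + 2 ^ j * (of_nat k * (-1) ^ (k - 1))"
    by (simp add: pderiv_mult pderiv_power pA pB)
  show ?thesis
  proof (cases k)
    case 0
    then show ?thesis unfolding e by (cases j) (simp_all add: algebra_simps)
  next
    case (Suc k')
    have j2: "of_nat j * 2 ^ (j - 1) * 2 = of_nat j * (2::real) ^ j" by (cases j) simp_all
    show ?thesis unfolding e using j2 Suc by (simp add: algebra_simps)
  qed
qed

lemma double_count: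
  fixes X :: "'v set set" and G :: "nat \<Rightarrow> real"
  assumes sc: "simplicial_complex X"
  shows "(\<Sum>v\<in>{v. {v} \<in> X}. \<Sum>\<rho>\<in>link X {v}. G (card \<rho>)) = (\<Sum>\<sigma>\<in>X. of_nat (card \<sigma>) * G (card \<sigma> - 1))"
proof -
  have finX: "finite X" by (rule sc_finite[OF sc])
  have finV: "finite {v. {v} \<in> X}"
  proof (rule finite_subset)
    show "{v. {v} \<in> X} \<subseteq> \<Union>X" by auto
    show "finite (\<Union>X)" using finX sc_face_finite[OF sc] by auto
  qed
  have inner: "(\<Sum>\<rho>\<in>link X {v}. G (card \<rho>)) = (\<Sum>\<sigma>\<in>{\<sigma>\<in>X. v \<in> \<sigma>}. G (card \<sigma> - 1))" for v
  proof -
    have img: "{\<sigma>\<in>X. v \<in> \<sigma>} = insert v ` link X {v}"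
    proof safe
      fix \<sigma> assume s: "\<sigma> \<in> X" "v \<in> \<sigma>"
      have "\<sigma> - {v} \<in> X" by (rule sc_dcl[OF sc s(1)]) auto
      moreover have "{v} \<union> (\<sigma> - {v}) = \<sigma>" using s by auto
      ultimately have "\<sigma> - {v} \<in> link X {v}" using s by (auto simp: link_def)
      moreover have "\<sigma> = insert v (\<sigma> - {v})" using s by auto
      ultimately show "\<sigma> \<in> insert v ` link X {v}" by blast
    next
      fix \<rho> assume "\<rho> \<in> link X {v}"
      then show "insert v \<rho> \<in> X" by (auto simp: link_def)
    qed
    have inj: "inj_on (insert v) (link X {v})"
    proof (rule inj_onI)
      fix a b assume a: "a \<in> link X {v}" and b: "b \<in> link X {v}" and e: "insert v a = insert v b"
      have "a = insert v a - {v}" "b = insert v b - {v}" using a b by (auto simp: link_def)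
      then show "a = b" using e by simp
    qed
    have "(\<Sum>\<sigma>\<in>{\<sigma>\<in>X. v \<in> \<sigma>}. G (card \<sigma> - 1)) = (\<Sum>\<rho>\<in>link X {v}. G (card (insert v \<rho>) - 1))"
      unfolding img by (rule sum.reindex[OF inj, unfolded comp_def])
    also have "\<dots> = (\<Sum>\<rho>\<in>link X {v}. G (card \<rho>))"
    proof (intro sum.cong refl)
      fix \<rho> assume r: "\<rho> \<in> link X {v}"
      then have "finite \<rho>" "v \<notin> \<rho>" using sc_face_finite[OF sc] by (auto simp: link_def)
      then show "G (card (insert v \<rho>) - 1) = G (card \<rho>)" by simp
    qed
    finally show ?thesis by simp
  qed
  have "(\<Sum>v\<in>{v. {v} \<in> X}. \<Sum>\<rho>\<in>link X {v}. G (card \<rho>))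
      = (\<Sum>v\<in>{v. {v} \<in> X}. \<Sum>\<sigma>\<in>{\<sigma>\<in>X. v \<in> \<sigma>}. G (card \<sigma> - 1))"
    by (simp add: inner)
  also have "\<dots> = (\<Sum>\<sigma>\<in>X. \<Sum>v\<in>{v\<in>{v. {v} \<in> X}. v \<in> \<sigma>}. G (card \<sigma> - 1))"
    by (rule sum.swap_restrict[OF finV finX])
  also have "\<dots> = (\<Sum>\<sigma>\<in>X. of_nat (card \<sigma>) * G (card \<sigma> - 1))"
  proof (intro sum.cong refl)
    fix \<sigma> assume s: "\<sigma> \<in> X"
    have "{v\<in>{v. {v} \<in> X}. v \<in> \<sigma>} = \<sigma>"
    proof safe
      fix v assume "v \<in> \<sigma>"
      show "{v} \<in> X" by (rule sc_dcl[OF sc s]) (use \<open>v \<in> \<sigma>\<close> in auto)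
    qed
    then show "(\<Sum>v\<in>{v\<in>{v. {v} \<in> X}. v \<in> \<sigma>}. G (card \<sigma> - 1)) = of_nat (card \<sigma>) * G (card \<sigma> - 1)"
      by simp
  qed
  finally show ?thesis .
qed


theorem corollary2p2p2:
  fixes X :: "'v::linorder set set" and n :: nat
  assumes "gen_homology_sphere TYPE('k::field) X (2 * n + 1)"
    and "\<forall>v. {v} \<in> X \<longrightarrow> (-1) ^ n * poly (h_poly (link X {v}) (2 * n)) (-1) \<ge> 0"
  shows "coeff (gamma_poly X (2 * n + 1)) n \<ge> 0"
proof -
  define m where "m = 2 * n + 1"
  have gm: "gen_homology_sphere TYPE('k) X m" using assms(1) by (simp add: m_def)
  have sc: "simplicial_complex X" by (rule ghs_sc[OF gm])
  have finX: "finite X" by (rule sc_finite[OF sc])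
  have bnd: "\<forall>\<sigma>\<in>X. card \<sigma> \<le> m" using ghs_card[OF gm] by blast
  have hX: "h_poly X m = HP X m" by (rule h_poly_eq[OF bnd])
  have pal: "palc m (HP X m)" unfolding palc_def
    using pal_coeffs[OF degree_HP[OF bnd finX] HP_pal_fun[OF gm]] by blast
  obtain g0 where g0: "degree g0 \<le> m div 2" "HP X m = GP m g0" using gamma_exists[OF pal] by blast
  have gam: "gamma_poly X m = g0" by (rule gamma_eq[OF _ g0(1)]) (simp add: hX g0(2))
  have md: "m div 2 = n" by (simp add: m_def)
  define Q where "Q = (\<Sum>i\<le>n. smult (coeff g0 i) ([:0,1:] ^ i * [:1,1:] ^ (2 * n - 2 * i)))"
  have GQ: "GP m g0 = [:1,1:] * Q"
    unfolding GP_def Q_def md sum_distrib_left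
  proof (intro sum.cong refl)
    fix i assume "i \<in> {..n}"
    then have e: "m - 2 * i = Suc (2 * n - 2 * i)" by (auto simp: m_def)
    have "[:0,1:] ^ i * [:1,1:] ^ (m - 2 * i) = [:1,1:] * ([:0,1:] ^ i * [:1,1::real:] ^ (2 * n - 2 * i))"
      unfolding e power_Suc by (rule mult.left_commute)
    then show "smult (coeff g0 i) ([:0,1:] ^ i * [:1,1:] ^ (m - 2 * i))
        = [:1,1:] * smult (coeff g0 i) ([:0,1:] ^ i * [:1,1:] ^ (2 * n - 2 * i))"
      by (simp only: mult_smult_right)
  qed
  have Hfac: "HP X m = [:1,1:] * Q" using g0(2) GQ by simp
  have Qm1: "poly Q (-1) = coeff g0 n * (-1) ^ n"
  proof -
    have "poly Q (-1) = (\<Sum>i\<le>n. coeff g0 i * ((-1) ^ i * 0 ^ (2 * n - 2 * i)))"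
      by (simp add: Q_def poly_sum)
    also have "\<dots> = (\<Sum>i\<le>n. if i = n then coeff g0 n * (-1) ^ n else 0)"
    proof (intro sum.cong refl)
      fix i assume "i \<in> {..n}"
      then have "i \<le> n" by simp
      then show "coeff g0 i * ((-1) ^ i * 0 ^ (2 * n - 2 * i)) = (if i = n then coeff g0 n * (-1) ^ n else (0::real))"
        by (cases "i = n") auto
    qed
    also have "\<dots> = coeff g0 n * (-1) ^ n" by simp
    finally show ?thesis .
  qed
  have H0: "poly (HP X m) (-1) = 0" using Hfac by simp
  have dH: "poly (pderiv (HP X m)) (-1) = coeff g0 n * (-1) ^ n"
  proof -
    have p1: "pderiv [:1,1::real:] = 1" by (simp add: pderiv_pCons)
    have pm: "pderiv ([:1,1:] * Q) = [:1,1:] * pderiv Q + Q * pderiv [:1,1:]" by (rule pderiv_mult)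
    have "poly (pderiv (HP X m)) (-1) = poly [:1,1:] (-1) * poly (pderiv Q) (-1) + poly Q (-1) * poly (pderiv [:1,1:]) (-1)"
      unfolding Hfac pm by (simp only: poly_add poly_mult)
    also have "\<dots> = poly Q (-1)" using p1 by simp
    finally have "poly (pderiv (HP X m)) (-1) = poly Q (-1)" .
    then show ?thesis using Qm1 by simp
  qed
  have sumD: "2 * poly (pderiv (HP X m)) (-1)
      = (\<Sum>\<sigma>\<in>X. of_nat (card \<sigma>) * (-1) ^ (card \<sigma> - 1) * 2 ^ (m - card \<sigma>)) - of_nat m * poly (HP X m) (-1)"
  proof -
    have "2 * poly (pderiv (HP X m)) (-1)
        = (\<Sum>\<sigma>\<in>X. 2 * poly (pderiv ([:0,1:] ^ card \<sigma> * [:1,-1:] ^ (m - card \<sigma>))) (-1::real))"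
      by (simp add: HP_def pderiv_sum' poly_sum sum_distrib_left)
    also have "\<dots> = (\<Sum>\<sigma>\<in>X. of_nat (card \<sigma>) * (-1) ^ (card \<sigma> - 1) * 2 ^ (m - card \<sigma>)
                 - of_nat m * ((-1) ^ card \<sigma> * 2 ^ (m - card \<sigma>)))"
    proof (intro sum.cong refl)
      fix \<sigma> assume s: "\<sigma> \<in> X"
      have "card \<sigma> + (m - card \<sigma>) = m" using bnd s by simp
      then show "2 * poly (pderiv ([:0,1:] ^ card \<sigma> * [:1,-1:] ^ (m - card \<sigma>))) (-1::real)
          = of_nat (card \<sigma>) * (-1) ^ (card \<sigma> - 1) * 2 ^ (m - card \<sigma>) - of_nat m * ((-1) ^ card \<sigma> * 2 ^ (m - card \<sigma>))"
        using D_term[of "card \<sigma>" "m - card \<sigma>"] by (simp add: mult.assoc)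
    qed
    also have "\<dots> = (\<Sum>\<sigma>\<in>X. of_nat (card \<sigma>) * (-1) ^ (card \<sigma> - 1) * 2 ^ (m - card \<sigma>))
                 - of_nat m * (\<Sum>\<sigma>\<in>X. (-1) ^ card \<sigma> * 2 ^ (m - card \<sigma>))"
      by (simp add: sum_subtractf sum_distrib_left)
    also have "(\<Sum>\<sigma>\<in>X. (-1) ^ card \<sigma> * 2 ^ (m - card \<sigma>)) = poly (HP X m) (-1::real)"
      by (simp add: poly_HP)
    finally show ?thesis .
  qed
  have key: "(\<Sum>\<sigma>\<in>X. of_nat (card \<sigma>) * (-1) ^ (card \<sigma> - 1) * 2 ^ (m - card \<sigma>)) = 2 * (coeff g0 n * (-1) ^ n)"
    using sumD H0 dH by simp
  have hL: "poly (h_poly (link X {v}) (2 * n)) (-1) = (\<Sum>\<rho>\<in>link X {v}. (-1) ^ card \<rho> * 2 ^ (2 * n - card \<rho>))"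
    if v: "{v} \<in> X" for v
  proof -
    have "\<forall>\<rho>\<in>link X {v}. card \<rho> \<le> 2 * n"
    proof
      fix \<rho> assume r: "\<rho> \<in> link X {v}"
      then have "{v} \<union> \<rho> \<in> X" "v \<notin> \<rho>" "finite \<rho>" using sc_face_finite[OF sc] by (auto simp: link_def)
      then have "card \<rho> + 1 \<le> m" using bnd by (auto simp: card_insert_if)
      then show "card \<rho> \<le> 2 * n" by (simp add: m_def)
    qed
    then have "h_poly (link X {v}) (2 * n) = HP (link X {v}) (2 * n)" by (rule h_poly_eq)
    then show ?thesis by (simp add: poly_HP)
  qed
  define G where "G k = (-1::real) ^ k * 2 ^ (2 * n - k)" for k
  have "(\<Sum>v\<in>{v. {v} \<in> X}. poly (h_poly (link X {v}) (2 * n)) (-1))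
      = (\<Sum>v\<in>{v. {v} \<in> X}. \<Sum>\<rho>\<in>link X {v}. G (card \<rho>))"
    by (intro sum.cong refl) (simp add: hL G_def)
  also have "\<dots> = (\<Sum>\<sigma>\<in>X. of_nat (card \<sigma>) * G (card \<sigma> - 1))"
    by (rule double_count[OF sc])
  also have "\<dots> = (\<Sum>\<sigma>\<in>X. of_nat (card \<sigma>) * (-1) ^ (card \<sigma> - 1) * 2 ^ (m - card \<sigma>))"
  proof (intro sum.cong refl)
    fix \<sigma> assume s: "\<sigma> \<in> X"
    show "of_nat (card \<sigma>) * G (card \<sigma> - 1) = of_nat (card \<sigma>) * (-1) ^ (card \<sigma> - 1) * 2 ^ (m - card \<sigma>)"
    proof (cases "card \<sigma> = 0")
      case True then show ?thesis by simp
    next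
      case False
      then have "2 * n - (card \<sigma> - 1) = m - card \<sigma>" using bnd s by (auto simp: m_def)
      then show ?thesis by (simp add: G_def)
    qed
  qed
  also have "\<dots> = 2 * (coeff g0 n * (-1) ^ n)" by (rule key)
  finally have S: "(\<Sum>v\<in>{v. {v} \<in> X}. poly (h_poly (link X {v}) (2 * n)) (-1)) = 2 * (coeff g0 n * (-1) ^ n)" .
  have "0 \<le> (\<Sum>v\<in>{v. {v} \<in> X}. (-1) ^ n * poly (h_poly (link X {v}) (2 * n)) (-1))"
    using assms(2) by (intro sum_nonneg) auto
  also have "\<dots> = (-1) ^ n * (2 * (coeff g0 n * (-1) ^ n))"
    by (simp add: sum_distrib_left[symmetric] S)
  also have "\<dots> = 2 * coeff g0 n * ((-1) ^ n * (-1) ^ n)" by (simp add: algebra_simps)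
  also have "(-1::real) ^ n * (-1) ^ n = 1" by (simp add: power_mult_distrib[symmetric])
  finally have "0 \<le> coeff g0 n" by simp
  then show ?thesis using gam by (simp add: m_def)
qed


end
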